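(* Assume Assumption 1, Assumption 2 and the null hypothesis $H_0:\ T_i(1)=T_i(0)$ for all $i$, and condition on $\boldsymbol{T}(1),\boldsymbol{T}(0)$. Then for each $1\le k\le K$, $$D_k\sim\mathrm{Bin}(d_k,g_k),\qquad N_{1k}\sim\mathrm{Bin}(n_k,g_k\phi_k),\qquad N_k\sim\mathrm{Bin}(n_k,g_k).$$
   Context: There are $n$ units. Unit $i$ has potential event times $T_i(1),T_i(0)\ge 0$, potential censoring times $C_i(1),C_i(0)\in[0,\infty]$, and treatment indicator $Z_i\in\{0,1\}$; bold letters denote $n$-vectors. Assumption 1: conditional on $\boldsymbol{T}(1),\boldsymbol{T}(0),\boldsymbol{C}(1),\boldsymbol{C}(0)$, the $Z_i$ are i.i.d. Bernoulli$(p_1)$, $p_1=1-p_0\in(0,1)$. Assumption 2: $(\boldsymbol{C}(1),\boldsymbol{C}(0))$ is independent of $(\boldsymbol{T}(1),\boldsymbol{T}(0))$ and the pairs $(C_i(1),C_i(0))$ are i.i.d. across $i$. $G_z(c)=\Pr(C_i(z)\ge c)$, $G(t)=p_1G_1(t)+p_0G_0(t)$. Realized: $W_i=\min\{T_i,C_i\}$, $\Delta_i=\mathbb{1}(T_i\le C_i)$ with $T_i=Z_iT_i(1)+(1-Z_i)T_i(0)$, $C_i=Z_iC_i(1)+(1-Z_i)C_i(0)$. Let $t_1<\dots<t_K$ be the distinct values of $\{T_i(0)\}$, $d_k=\#\{i:T_i(0)=t_k\}$, $n_k=\#\{i:T_i(0)\ge t_k\}$, $g_k=G(t_k)$, $\phi_k=p_1G_1(t_k)/G(t_k)$;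 $N_{1k}=\sum_iZ_i\mathbb{1}(W_i\ge t_k)$, $N_k=\sum_i\mathbb{1}(W_i\ge t_k)$, $D_k=\sum_i\Delta_i\mathbb{1}(W_i=t_k)$. $\mathrm{Bin}(m,p)$ denotes the binomial distribution. *)

theory Defs
  imports "HOL-Probability.Probability"
begin

text \<open>Units are indexed by {..<n}. Event times are nonnegative reals; censoring
times take values in [0,\<infinity>], modelled by ennreal.\<close>

definition Tobs :: "(nat \<Rightarrow> 'a \<Rightarrow> bool) \<Rightarrow> (nat \<Rightarrow> real) \<Rightarrow> (nat \<Rightarrow> real) \<Rightarrow> nat \<Rightarrow> 'a \<Rightarrow> real" where
  "Tobs Z T1 T0 i \<omega> = (if Z i \<omega> then T1 i else T0 i)"

definition Cobs :: "(nat \<Rightarrow> 'a \<Rightarrow> bool) \<Rightarrow> (nat \<Rightarrow> 'a \<Rightarrow> ennreal) \<Rightarrow> (nat \<Rightarrow> 'a \<Rightarrow> ennreal) \<Rightarrow> nat \<Rightarrow> 'a \<Rightarrow> ennreal" where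
  "Cobs Z C1 C0 i \<omega> = (if Z i \<omega> then C1 i \<omega> else C0 i \<omega>)"

definition Wobs where
  "Wobs Z T1 T0 C1 C0 i \<omega> = min (ennreal (Tobs Z T1 T0 i \<omega>)) (Cobs Z C1 C0 i \<omega>)"

definition Delta where
  "Delta Z T1 T0 C1 C0 i \<omega> = (ennreal (Tobs Z T1 T0 i \<omega>) \<le> Cobs Z C1 C0 i \<omega>)"

definition N1cnt where
  "N1cnt n Z T1 T0 C1 C0 t \<omega> = card {i\<in>{..<n}. Z i \<omega> \<and> ennreal t \<le> Wobs Z T1 T0 C1 C0 i \<omega>}"

definition Ncnt where
  "Ncnt n Z T1 T0 C1 C0 t \<omega> = card {i\<in>{..<n}. ennreal t \<le> Wobs Z T1 T0 C1 C0 i \<omega>}"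

definition Dcnt where
  "Dcnt n Z T1 T0 C1 C0 t \<omega> = card {i\<in>{..<n}. Delta Z T1 T0 C1 C0 i \<omega> \<and> Wobs Z T1 T0 C1 C0 i \<omega> = ennreal t}"

definition Kval :: "nat \<Rightarrow> (nat \<Rightarrow> real) \<Rightarrow> nat" where
  "Kval n T0 = card (T0 ` {..<n})"

definition tval :: "nat \<Rightarrow> (nat \<Rightarrow> real) \<Rightarrow> nat \<Rightarrow> real" where
  "tval n T0 k = sorted_list_of_set (T0 ` {..<n}) ! (k - 1)"

definition dcnt :: "nat \<Rightarrow> (nat \<Rightarrow> real) \<Rightarrow> real \<Rightarrow> nat" where
  "dcnt n T0 t = card {i\<in>{..<n}. T0 i = t}"

definition ncnt :: "nat \<Rightarrow> (nat \<Rightarrow> real) \<Rightarrow> real \<Rightarrow> nat" where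
  "ncnt n T0 t = card {i\<in>{..<n}. t \<le> T0 i}"

end

theory Submission
  imports Defs
begin

lemma (in prob_space) card_binomial:
  fixes X :: "nat \<Rightarrow> 'a \<Rightarrow> bool" and A :: "nat set"
  assumes fin: "finite A" and q: "0 \<le> q" "q \<le> 1"
    and meas: "\<And>i. i \<in> A \<Longrightarrow> {\<omega>\<in>space M. X i \<omega>} \<in> events"
    and joint: "\<And>b. prob {\<omega>\<in>space M. \<forall>i\<in>A. X i \<omega> = b i} = (\<Prod>i\<in>A. if b i then q else 1 - q)"
  shows "distr M (count_space UNIV) (\<lambda>\<omega>. card {i\<in>A. X i \<omega>}) = measure_pmf (binomial_pmf (card A) q)"
proof -
  have mi: "{\<omega>\<in>space M. i \<in> {j\<in>A. X j \<omega>}} \<in> events" for i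
    using meas[of i] by (cases "i \<in> A") auto
  have fm: "(\<lambda>\<omega>. card {i\<in>A. X i \<omega>}) \<in> measurable M (count_space UNIV)"
    by (rule measurable_card) (rule mi)
  have ev: "{\<omega>\<in>space M. \<forall>i\<in>A. X i \<omega> = b i} \<in> events" for b
  proof -
    have "{\<omega>\<in>space M. X i \<omega> = b i} \<in> events" if "i \<in> A" for i
    proof (cases "b i")
      case True then show ?thesis using meas[OF that] by simp
    next
      case False
      have "{\<omega>\<in>space M. X i \<omega> = b i} = space M - {\<omega>\<in>space M. X i \<omega>}" using False by auto
      then show ?thesis using meas[OF that] by auto
    qed
    then show ?thesis using fin by (intro sets.sets_Collect_countable_All') (auto intro: countable_finite)
  qed
  show ?thesis
  proof (rule measure_eqI_countable[where A=UNIV])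
    fix m :: nat
    define S where "S = {B. B \<subseteq> A \<and> card B = m}"
    have finS: "finite S" using fin unfolding S_def by simp
    have eqset: "{\<omega>\<in>space M. card {i\<in>A. X i \<omega>} = m} = (\<Union>B\<in>S. {\<omega>\<in>space M. \<forall>i\<in>A. X i \<omega> = (i \<in> B)})"
    proof (intro set_eqI iffI)
      fix \<omega> assume "\<omega> \<in> {\<omega>\<in>space M. card {i\<in>A. X i \<omega>} = m}"
      then show "\<omega> \<in> (\<Union>B\<in>S. {\<omega>\<in>space M. \<forall>i\<in>A. X i \<omega> = (i \<in> B)})"
        unfolding S_def by (intro UN_I[of "{i\<in>A. X i \<omega>}"]) auto
    next
      fix \<omega> assume "\<omega> \<in> (\<Union>B\<in>S. {\<omega>\<in>space M. \<forall>i\<in>A. X i \<omega> = (i \<in> B)})"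
      then obtain B where B: "B \<in> S" "\<omega> \<in> space M" "\<forall>i\<in>A. X i \<omega> = (i \<in> B)" by auto
      then have "{i\<in>A. X i \<omega>} = B" unfolding S_def by auto
      then show "\<omega> \<in> {\<omega>\<in>space M. card {i\<in>A. X i \<omega>} = m}" using B unfolding S_def by auto
    qed
    have disj: "disjoint_family_on (\<lambda>B. {\<omega>\<in>space M. \<forall>i\<in>A. X i \<omega> = (i \<in> B)}) S"
      unfolding disjoint_family_on_def S_def by blast
    have pB: "prob {\<omega>\<in>space M. \<forall>i\<in>A. X i \<omega> = (i \<in> B)} = q ^ m * (1 - q) ^ (card A - m)" if "B \<in> S" for B
    proof -
      have BA: "B \<subseteq> A" "card B = m" using that unfolding S_def by auto
      have "prob {\<omega>\<in>space M. \<forall>i\<in>A. X i \<omega> = (i \<in> B)} = (\<Prod>i\<in>A. if i \<in> B then q else 1 - q)"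
        by (rule joint)
      also have "\<dots> = (\<Prod>i\<in>A \<inter> B. q) * (\<Prod>i\<in>A - B. 1 - q)"
        using BA by (simp add: prod.If_cases[OF fin] Int_absorb1 Diff_eq Int_commute)
      also have "\<dots> = q ^ m * (1 - q) ^ (card A - m)"
        using BA fin by (simp add: Int_absorb1 card_Diff_subset finite_subset)
      finally show ?thesis .
    qed
    have "prob {\<omega>\<in>space M. card {i\<in>A. X i \<omega>} = m} = (\<Sum>B\<in>S. prob {\<omega>\<in>space M. \<forall>i\<in>A. X i \<omega> = (i \<in> B)})"
      unfolding eqset by (rule finite_measure_finite_Union[OF finS _ disj]) (use ev in auto)
    also have "\<dots> = (\<Sum>B\<in>S. q ^ m * (1 - q) ^ (card A - m))"
      by (rule sum.cong) (auto simp: pB)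
    also have "\<dots> = real (card A choose m) * q ^ m * (1 - q) ^ (card A - m)"
      using n_subsets[OF fin, of m] unfolding S_def by simp
    finally have P: "prob {\<omega>\<in>space M. card {i\<in>A. X i \<omega>} = m} = real (card A choose m) * q ^ m * (1 - q) ^ (card A - m)" .
    have "emeasure (distr M (count_space UNIV) (\<lambda>\<omega>. card {i\<in>A. X i \<omega>})) {m}
        = emeasure M {\<omega>\<in>space M. card {i\<in>A. X i \<omega>} = m}"
      using fm by (subst emeasure_distr) (auto intro!: arg_cong[where f="emeasure M"])
    also have "\<dots> = ennreal (real (card A choose m) * q ^ m * (1 - q) ^ (card A - m))"
      using P by (simp add: emeasure_eq_measure)
    also have "\<dots> = emeasure (measure_pmf (binomial_pmf (card A) q)) {m}"
      using q by (simp add: emeasure_pmf_single)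
    finally show "emeasure (distr M (count_space UNIV) (\<lambda>\<omega>. card {i\<in>A. X i \<omega>})) {m} = emeasure (measure_pmf (binomial_pmf (card A) q)) {m}" .
  qed auto
qed

lemma (in prob_space) indep_prob_all:
  assumes X: "indep_vars M' X I" and AI: "A \<subseteq> I" and fin: "finite A"
    and S: "\<And>i. i \<in> A \<Longrightarrow> S i \<in> sets (M' i)"
  shows "prob {\<omega>\<in>space M. \<forall>i\<in>A. X i \<omega> \<in> S i} = (\<Prod>i\<in>A. prob {\<omega>\<in>space M. X i \<omega> \<in> S i})"
proof (cases "A = {}")
  case True then show ?thesis by (simp add: prob_space)
next
  case False
  have "prob (\<Inter>i\<in>A. X i -` S i \<inter> space M) = (\<Prod>i\<in>A. prob (X i -` S i \<inter> space M))"
    by (rule indep_varsD[OF X False fin AI S])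
  moreover have "(\<Inter>i\<in>A. X i -` S i \<inter> space M) = {\<omega>\<in>space M. \<forall>i\<in>A. X i \<omega> \<in> S i}"
    using False by auto
  moreover have "\<And>i. X i -` S i \<inter> space M = {\<omega>\<in>space M. X i \<omega> \<in> S i}" by auto
  ultimately show ?thesis by simp
qed

lemma (in prob_space) mix_indep:
  fixes Z :: "nat \<Rightarrow> 'a \<Rightarrow> bool" and Cp :: "nat \<Rightarrow> 'a \<Rightarrow> 'c" and N :: "'c measure" and I :: "nat set"
  assumes finI: "finite I"
    and Zmeas: "\<And>i. i \<in> I \<Longrightarrow> Z i \<in> measurable M (count_space UNIV)"
    and Cmeas: "\<And>i. i \<in> I \<Longrightarrow> Cp i \<in> measurable M N"
    and ZC: "distr M (Pi\<^sub>M I (\<lambda>_. count_space UNIV) \<Otimes>\<^sub>M Pi\<^sub>M I (\<lambda>_. N)) (\<lambda>\<omega>. (\<lambda>i\<in>I. Z i \<omega>, \<lambda>i\<in>I. Cp i \<omega>))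
      = distr M (Pi\<^sub>M I (\<lambda>_. count_space UNIV)) (\<lambda>\<omega>. \<lambda>i\<in>I. Z i \<omega>) \<Otimes>\<^sub>M distr M (Pi\<^sub>M I (\<lambda>_. N)) (\<lambda>\<omega>. \<lambda>i\<in>I. Cp i \<omega>)"
    and Zi: "indep_vars (\<lambda>_. count_space UNIV) Z I"
    and Ci: "indep_vars (\<lambda>_. N) Cp I"
    and AI: "A \<subseteq> I"
    and R: "\<And>\<beta> i. i \<in> I \<Longrightarrow> R \<beta> i \<in> sets N"
  shows "prob {\<omega>\<in>space M. \<forall>i\<in>A. Cp i \<omega> \<in> R (Z i \<omega>) i}
       = (\<Prod>i\<in>A. \<Sum>\<beta>\<in>UNIV. prob {\<omega>\<in>space M. Z i \<omega> = \<beta>} * prob {\<omega>\<in>space M. Cp i \<omega> \<in> R \<beta> i})"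
proof -
  have finA: "finite A" using finI AI finite_subset by blast
  define ZE where "ZE s = {\<omega>\<in>space M. \<forall>i\<in>A. Z i \<omega> = s i}" for s
  define CE where "CE s = {\<omega>\<in>space M. \<forall>i\<in>A. Cp i \<omega> \<in> R (s i) i}" for s
  define PZ where "PZ = Pi\<^sub>M I (\<lambda>_. count_space (UNIV::bool set))"
  define PC where "PC = Pi\<^sub>M I (\<lambda>_. N)"
  define Zv where "Zv = (\<lambda>\<omega>. \<lambda>i\<in>I. Z i \<omega>)"
  define Cv where "Cv = (\<lambda>\<omega>. \<lambda>i\<in>I. Cp i \<omega>)"
  have Zvm: "Zv \<in> measurable M PZ" unfolding Zv_def PZ_def
    by (rule measurable_restrict) (rule Zmeas)
  have Cvm: "Cv \<in> measurable M PC" unfolding Cv_def PC_def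
    by (rule measurable_restrict) (rule Cmeas)
  have pZ: "prob (ZE s) = (\<Prod>i\<in>A. prob {\<omega>\<in>space M. Z i \<omega> = s i})" for s
    using indep_prob_all[OF Zi AI finA, of "\<lambda>i. {s i}"] unfolding ZE_def by simp
  have pC: "prob (CE s) = (\<Prod>i\<in>A. prob {\<omega>\<in>space M. Cp i \<omega> \<in> R (s i) i})" for s
    using indep_prob_all[OF Ci AI finA, of "\<lambda>i. R (s i) i"] R AI unfolding CE_def by auto
  have pZC: "prob (ZE s \<inter> CE s) = prob (ZE s) * prob (CE s)" for s
  proof -
    define SZ where "SZ = {f\<in>space PZ. \<forall>i\<in>A. f i \<in> {s i}}"
    define SC where "SC = {f\<in>space PC. \<forall>i\<in>A. f i \<in> R (s i) i}"
    have SZs: "SZ \<in> sets PZ" unfolding SZ_def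
    proof (rule sets.sets_Collect_countable_All')
      fix i assume "i \<in> A"
      then have "i \<in> I" using AI by auto
      have "(\<lambda>f. f i) -` {s i} \<inter> space PZ \<in> sets PZ"
        unfolding PZ_def by (rule measurable_sets[OF measurable_component_singleton[OF \<open>i \<in> I\<close>]]) auto
      then show "{f \<in> space PZ. f i \<in> {s i}} \<in> sets PZ" unfolding PZ_def
        by (simp add: vimage_def Int_def conj_commute)
    qed (use finA countable_finite in auto)
    have SCs: "SC \<in> sets PC" unfolding SC_def
    proof (rule sets.sets_Collect_countable_All')
      fix i assume "i \<in> A"
      then have "i \<in> I" using AI by auto
      have "(\<lambda>f. f i) -` R (s i) i \<inter> space PC \<in> sets PC"
        unfolding PC_def
        by (rule measurable_sets[OF measurable_component_singleton[OF \<open>i \<in> I\<close>]]) (use R \<open>i \<in> I\<close> in auto)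
      then show "{f \<in> space PC. f i \<in> R (s i) i} \<in> sets PC"
        by (simp add: vimage_def Int_def conj_commute)
    qed (use finA countable_finite in auto)
    have ZEeq: "ZE s = Zv -` SZ \<inter> space M"
      using AI measurable_space[OF Zvm] unfolding ZE_def SZ_def Zv_def by auto
    have CEeq: "CE s = Cv -` SC \<inter> space M"
      using AI measurable_space[OF Cvm] unfolding CE_def SC_def Cv_def by auto
    have Vm: "(\<lambda>\<omega>. (Zv \<omega>, Cv \<omega>)) \<in> measurable M (PZ \<Otimes>\<^sub>M PC)"
      using Zvm Cvm by (rule measurable_Pair)
    have ZCeq: "ZE s \<inter> CE s = (\<lambda>\<omega>. (Zv \<omega>, Cv \<omega>)) -` (SZ \<times> SC) \<inter> space M"
      unfolding ZEeq CEeq by auto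
    interpret DC: prob_space "distr M PC Cv" by (rule prob_space_distr[OF Cvm])
    interpret DZ: prob_space "distr M PZ Zv" by (rule prob_space_distr[OF Zvm])
    have ZC': "distr M (PZ \<Otimes>\<^sub>M PC) (\<lambda>\<omega>. (Zv \<omega>, Cv \<omega>)) = distr M PZ Zv \<Otimes>\<^sub>M distr M PC Cv"
      using ZC unfolding PZ_def PC_def Zv_def Cv_def .
    have "prob (ZE s \<inter> CE s) = measure (distr M (PZ \<Otimes>\<^sub>M PC) (\<lambda>\<omega>. (Zv \<omega>, Cv \<omega>))) (SZ \<times> SC)"
      unfolding ZCeq using SZs SCs by (subst measure_distr[OF Vm]) auto
    also have "\<dots> = measure (distr M PZ Zv \<Otimes>\<^sub>M distr M PC Cv) (SZ \<times> SC)" unfolding ZC' ..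
    also have "\<dots> = measure (distr M PZ Zv) SZ * measure (distr M PC Cv) SC"
      unfolding measure_def using SZs SCs
      by (subst DC.emeasure_pair_measure_Times) (auto simp: enn2real_mult)
    also have "\<dots> = prob (ZE s) * prob (CE s)"
      unfolding ZEeq CEeq using SZs SCs by (simp add: measure_distr[OF Zvm] measure_distr[OF Cvm])
    finally show ?thesis .
  qed
  have Eeq: "{\<omega>\<in>space M. \<forall>i\<in>A. Cp i \<omega> \<in> R (Z i \<omega>) i} = (\<Union>s\<in>PiE A (\<lambda>_. UNIV). ZE s \<inter> CE s)"
  proof (intro set_eqI iffI)
    fix \<omega> assume "\<omega> \<in> {\<omega>\<in>space M. \<forall>i\<in>A. Cp i \<omega> \<in> R (Z i \<omega>) i}"
    then show "\<omega> \<in> (\<Union>s\<in>PiE A (\<lambda>_. UNIV). ZE s \<inter> CE s)"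
      unfolding ZE_def CE_def by (intro UN_I[of "restrict (\<lambda>i. Z i \<omega>) A"]) auto
  qed (auto simp: ZE_def CE_def)
  have disj: "disjoint_family_on (\<lambda>s. ZE s \<inter> CE s) (PiE A (\<lambda>_. UNIV))"
    unfolding disjoint_family_on_def
  proof (intro ballI impI)
    fix m n :: "nat \<Rightarrow> bool" assume mn: "m \<in> PiE A (\<lambda>_. UNIV)" "n \<in> PiE A (\<lambda>_. UNIV)" "m \<noteq> n"
    then obtain i where "i \<in> A" "m i \<noteq> n i"
      using extensionalityI[of m A n] by (auto simp: PiE_iff)
    then show "(ZE m \<inter> CE m) \<inter> (ZE n \<inter> CE n) = {}" unfolding ZE_def by auto
  qed
  have evs: "ZE s \<inter> CE s \<in> events" for s
  proof -
    have "ZE s \<in> events" unfolding ZE_def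
    proof (rule sets.sets_Collect_countable_All')
      fix i assume "i \<in> A"
      then have "Z i -` {s i} \<inter> space M \<in> events" using AI Zmeas by (intro measurable_sets) auto
      then show "{\<omega> \<in> space M. Z i \<omega> = s i} \<in> events" by (simp add: vimage_def Int_def conj_commute)
    qed (use finA countable_finite in auto)
    moreover have "CE s \<in> events" unfolding CE_def
    proof (rule sets.sets_Collect_countable_All')
      fix i assume "i \<in> A"
      then have "Cp i -` R (s i) i \<inter> space M \<in> events" using AI Cmeas R by (intro measurable_sets) auto
      then show "{\<omega> \<in> space M. Cp i \<omega> \<in> R (s i) i} \<in> events" by (simp add: vimage_def Int_def conj_commute)
    qed (use finA countable_finite in auto)
    ultimately show ?thesis by auto
  qed
  have "prob {\<omega>\<in>space M. \<forall>i\<in>A. Cp i \<omega> \<in> R (Z i \<omega>) i} = (\<Sum>s\<in>PiE A (\<lambda>_. UNIV). prob (ZE s \<inter> CE s))"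
    unfolding Eeq by (rule finite_measure_finite_Union) (use finA disj evs in \<open>auto intro: finite_PiE\<close>)
  also have "\<dots> = (\<Sum>s\<in>PiE A (\<lambda>_. UNIV). \<Prod>i\<in>A. prob {\<omega>\<in>space M. Z i \<omega> = s i} * prob {\<omega>\<in>space M. Cp i \<omega> \<in> R (s i) i})"
    by (rule sum.cong) (auto simp: pZC pZ pC prod.distrib)
  also have "\<dots> = (\<Prod>i\<in>A. \<Sum>\<beta>\<in>UNIV. prob {\<omega>\<in>space M. Z i \<omega> = \<beta>} * prob {\<omega>\<in>space M. Cp i \<omega> \<in> R \<beta> i})"
    by (rule prod_sum_PiE[symmetric]) (use finA in auto)
  finally show ?thesis .
qed

lemma final_binom:
  fixes M :: "'a measure" and n :: nat and p1 :: real
    and Z :: "nat \<Rightarrow> 'a \<Rightarrow> bool"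
    and C1 C0 :: "nat \<Rightarrow> 'a \<Rightarrow> ennreal"
  assumes P: "prob_space M"
    and p1: "0 < p1" "p1 < 1"
    and Zmeas: "\<And>i. i < n \<Longrightarrow> Z i \<in> measurable M (count_space UNIV)"
    and Cmeas: "\<And>i. i < n \<Longrightarrow> C1 i \<in> borel_measurable M" "\<And>i. i < n \<Longrightarrow> C0 i \<in> borel_measurable M"
    and Zindep_C: "distr M (Pi\<^sub>M {..<n} (\<lambda>_. count_space UNIV) \<Otimes>\<^sub>M Pi\<^sub>M {..<n} (\<lambda>_. borel \<Otimes>\<^sub>M borel))
        (\<lambda>\<omega>. (\<lambda>i\<in>{..<n}. Z i \<omega>, \<lambda>i\<in>{..<n}. (C1 i \<omega>, C0 i \<omega>)))
      = distr M (Pi\<^sub>M {..<n} (\<lambda>_. count_space UNIV)) (\<lambda>\<omega>. \<lambda>i\<in>{..<n}. Z i \<omega>)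
        \<Otimes>\<^sub>M distr M (Pi\<^sub>M {..<n} (\<lambda>_. borel \<Otimes>\<^sub>M borel)) (\<lambda>\<omega>. \<lambda>i\<in>{..<n}. (C1 i \<omega>, C0 i \<omega>))"
    and Zindep: "prob_space.indep_vars M (\<lambda>_. count_space UNIV) Z {..<n}"
    and Zbern: "\<And>i. i < n \<Longrightarrow> distr M (count_space UNIV) (Z i) = measure_pmf (bernoulli_pmf p1)"
    and Cindep: "prob_space.indep_vars M (\<lambda>_. borel \<Otimes>\<^sub>M borel) (\<lambda>i \<omega>. (C1 i \<omega>, C0 i \<omega>)) {..<n}"
    and S: "S1 \<in> sets borel" "S0 \<in> sets borel"
    and a1: "\<And>i. i < n \<Longrightarrow> measure M {\<omega>\<in>space M. C1 i \<omega> \<in> S1} = a1" "0 \<le> a1" "a1 \<le> 1"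
    and a0: "\<And>i. i < n \<Longrightarrow> measure M {\<omega>\<in>space M. C0 i \<omega> \<in> S0} = a0" "0 \<le> a0" "a0 \<le> 1"
    and AI: "A \<subseteq> {..<n}"
  shows "distr M (count_space UNIV) (\<lambda>\<omega>. card {i\<in>A. if Z i \<omega> then C1 i \<omega> \<in> S1 else C0 i \<omega> \<in> S0})
       = measure_pmf (binomial_pmf (card A) (p1 * a1 + (1 - p1) * a0))"
proof -
  interpret prob_space M by (rule P)
  define q where "q = p1 * a1 + (1 - p1) * a0"
  define X where "X i \<omega> = (if Z i \<omega> then C1 i \<omega> \<in> S1 else C0 i \<omega> \<in> S0)" for i \<omega>
  have finA: "finite A" using AI finite_subset by blast
  have q: "0 \<le> q" "q \<le> 1" unfolding q_def using p1 a1 a0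
    by (auto intro!: add_nonneg_nonneg mult_nonneg_nonneg)
       (smt (verit, best) mult_left_le mult_nonneg_nonneg)
  have Cpm: "(\<lambda>\<omega>. (C1 i \<omega>, C0 i \<omega>)) \<in> measurable M (borel \<Otimes>\<^sub>M borel)" if "i < n" for i
    using Cmeas[OF that] by (rule measurable_Pair)
  have pZT: "prob {\<omega>\<in>space M. Z i \<omega> = True} = p1" if "i < n" for i
  proof -
    have "prob {\<omega>\<in>space M. Z i \<omega> = True} = measure (distr M (count_space UNIV) (Z i)) {True}"
      using Zmeas[OF that] by (subst measure_distr) (auto simp: vimage_def Int_def conj_commute)
    also have "\<dots> = p1" using p1 by (simp add: Zbern[OF that] measure_pmf_single)
    finally show ?thesis .
  qed
  have pZF: "prob {\<omega>\<in>space M. Z i \<omega> = False} = 1 - p1" if "i < n" for i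
  proof -
    have "prob {\<omega>\<in>space M. Z i \<omega> = False} = measure (distr M (count_space UNIV) (Z i)) {False}"
      using Zmeas[OF that] by (subst measure_distr) (auto simp: vimage_def Int_def conj_commute)
    also have "\<dots> = 1 - p1" using p1 by (simp add: Zbern[OF that] measure_pmf_single)
    finally show ?thesis .
  qed
  have ev1: "{\<omega>\<in>space M. C1 i \<omega> \<in> S1} \<in> events" if "i < n" for i
    using measurable_sets[OF Cmeas(1)[OF that] S(1)] by (simp add: vimage_def Int_def conj_commute)
  have ev0: "{\<omega>\<in>space M. C0 i \<omega> \<in> S0} \<in> events" if "i < n" for i
    using measurable_sets[OF Cmeas(2)[OF that] S(2)] by (simp add: vimage_def Int_def conj_commute)
  have evZ: "{\<omega>\<in>space M. Z i \<omega> = \<beta>} \<in> events" if "i < n" for i \<beta>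
    using measurable_sets[OF Zmeas[OF that], of "{\<beta>}"] by (simp add: vimage_def Int_def conj_commute)
  have pc1: "prob {\<omega>\<in>space M. (C1 i \<omega> \<in> S1) = c} = (if c then a1 else 1 - a1)" if "i < n" for i c
  proof (cases c)
    case False
    have "{\<omega>\<in>space M. (C1 i \<omega> \<in> S1) = c} = space M - {\<omega>\<in>space M. C1 i \<omega> \<in> S1}" using False by auto
    then show ?thesis using prob_compl[OF ev1[OF that]] a1(1)[OF that] False by simp
  qed (use a1(1)[OF that] in simp)
  have pc0: "prob {\<omega>\<in>space M. (C0 i \<omega> \<in> S0) = c} = (if c then a0 else 1 - a0)" if "i < n" for i c
  proof (cases c)
    case False
    have "{\<omega>\<in>space M. (C0 i \<omega> \<in> S0) = c} = space M - {\<omega>\<in>space M. C0 i \<omega> \<in> S0}" using False by auto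
    then show ?thesis using prob_compl[OF ev0[OF that]] a0(1)[OF that] False by simp
  qed (use a0(1)[OF that] in simp)
  have joint: "prob {\<omega>\<in>space M. \<forall>i\<in>A. X i \<omega> = b i} = (\<Prod>i\<in>A. if b i then q else 1 - q)" for b
  proof -
    define R where "R \<beta> i = (if \<beta> then {c. (fst c \<in> S1) = b i} else {c. (snd c \<in> S0) = b i})" for \<beta> i
    have Rs: "R \<beta> i \<in> sets (borel \<Otimes>\<^sub>M borel)" for \<beta> i
    proof -
      have "{c::ennreal\<times>ennreal. (fst c \<in> S1) = b i} = (if b i then S1 else UNIV - S1) \<times> UNIV" by auto
      moreover have "{c::ennreal\<times>ennreal. (snd c \<in> S0) = b i} = UNIV \<times> (if b i then S0 else UNIV - S0)" by auto
      ultimately show ?thesis unfolding R_def using S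
        by (auto intro!: pair_measureI borel_comp simp: Compl_eq_Diff_UNIV[symmetric])
    qed
    have eq: "{\<omega>\<in>space M. \<forall>i\<in>A. X i \<omega> = b i} = {\<omega>\<in>space M. \<forall>i\<in>A. (C1 i \<omega>, C0 i \<omega>) \<in> R (Z i \<omega>) i}"
      unfolding X_def R_def by auto
    have "prob {\<omega>\<in>space M. \<forall>i\<in>A. (C1 i \<omega>, C0 i \<omega>) \<in> R (Z i \<omega>) i}
       = (\<Prod>i\<in>A. \<Sum>\<beta>\<in>UNIV. prob {\<omega>\<in>space M. Z i \<omega> = \<beta>} * prob {\<omega>\<in>space M. (C1 i \<omega>, C0 i \<omega>) \<in> R \<beta> i})"
      by (rule mix_indep[where I="{..<n}" and N="borel \<Otimes>\<^sub>M borel" and Cp="\<lambda>i \<omega>. (C1 i \<omega>, C0 i \<omega>)", OF _ _ _ Zindep_C Zindep Cindep AI])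
         (auto intro: Zmeas Cpm Rs)
    also have "\<dots> = (\<Prod>i\<in>A. if b i then q else 1 - q)"
    proof (rule prod.cong[OF refl])
      fix i assume "i \<in> A"
      then have i: "i < n" using AI by auto
      have "(\<Sum>\<beta>\<in>UNIV. prob {\<omega>\<in>space M. Z i \<omega> = \<beta>} * prob {\<omega>\<in>space M. (C1 i \<omega>, C0 i \<omega>) \<in> R \<beta> i})
          = p1 * prob {\<omega>\<in>space M. (C1 i \<omega> \<in> S1) = b i} + (1 - p1) * prob {\<omega>\<in>space M. (C0 i \<omega> \<in> S0) = b i}"
        using pZT[OF i] pZF[OF i] by (simp add: UNIV_bool R_def)
      also have "\<dots> = (if b i then q else 1 - q)"
        by (simp add: pc1[OF i] pc0[OF i] q_def algebra_simps)
      finally show "(\<Sum>\<beta>\<in>UNIV. prob {\<omega>\<in>space M. Z i \<omega> = \<beta>} * prob {\<omega>\<in>space M. (C1 i \<omega>, C0 i \<omega>) \<in> R \<beta> i})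
          = (if b i then q else 1 - q)" .
    qed
    finally show ?thesis unfolding eq .
  qed
  have meas: "{\<omega>\<in>space M. X i \<omega>} \<in> events" if "i \<in> A" for i
  proof -
    have i: "i < n" using that AI by auto
    have "{\<omega>\<in>space M. X i \<omega>} = ({\<omega>\<in>space M. Z i \<omega> = True} \<inter> {\<omega>\<in>space M. C1 i \<omega> \<in> S1})
        \<union> ({\<omega>\<in>space M. Z i \<omega> = False} \<inter> {\<omega>\<in>space M. C0 i \<omega> \<in> S0})"
      unfolding X_def by auto
    moreover have "{\<omega>\<in>space M. Z i \<omega> = True} \<in> events" "{\<omega>\<in>space M. Z i \<omega> = False} \<in> events"
      using evZ[OF i] by blast+
    ultimately show ?thesis using ev1[OF i] ev0[OF i]
      by (metis (no_types, lifting) sets.Int sets.Un)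
  qed
  show ?thesis
    using card_binomial[OF finA q meas joint] unfolding X_def q_def .
qed


theorem lemmaA4:
  fixes M :: "'a measure" and n :: nat and p1 :: real
    and T1 T0 :: "nat \<Rightarrow> real"
    and Z :: "nat \<Rightarrow> 'a \<Rightarrow> bool"
    and C1 C0 :: "nat \<Rightarrow> 'a \<Rightarrow> ennreal"
    and Cd :: "(ennreal \<times> ennreal) measure"
    and G1 G0 :: "real \<Rightarrow> real"
  assumes P: "prob_space M"
    and p1: "0 < p1" "p1 < 1"
    and Tnn: "\<And>i. i < n \<Longrightarrow> 0 \<le> T1 i" "\<And>i. i < n \<Longrightarrow> 0 \<le> T0 i"
    and H0: "\<And>i. i < n \<Longrightarrow> T1 i = T0 i"
    and Zmeas: "\<And>i. i < n \<Longrightarrow> Z i \<in> measurable M (count_space UNIV)"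
    and Cmeas: "\<And>i. i < n \<Longrightarrow> C1 i \<in> borel_measurable M" "\<And>i. i < n \<Longrightarrow> C0 i \<in> borel_measurable M"
    \<comment> \<open>Assumption 1: given the censoring times, Z_i i.i.d. Bernoulli(p1)\<close>
    and Zindep_C: "distr M (Pi\<^sub>M {..<n} (\<lambda>_. count_space UNIV) \<Otimes>\<^sub>M Pi\<^sub>M {..<n} (\<lambda>_. borel \<Otimes>\<^sub>M borel))
        (\<lambda>\<omega>. (\<lambda>i\<in>{..<n}. Z i \<omega>, \<lambda>i\<in>{..<n}. (C1 i \<omega>, C0 i \<omega>)))
      = distr M (Pi\<^sub>M {..<n} (\<lambda>_. count_space UNIV)) (\<lambda>\<omega>. \<lambda>i\<in>{..<n}. Z i \<omega>)
        \<Otimes>\<^sub>M distr M (Pi\<^sub>M {..<n} (\<lambda>_. borel \<Otimes>\<^sub>M borel)) (\<lambda>\<omega>. \<lambda>i\<in>{..<n}. (C1 i \<omega>, C0 i \<omega>))"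
    and Zindep: "prob_space.indep_vars M (\<lambda>_. count_space UNIV) Z {..<n}"
    and Zbern: "\<And>i. i < n \<Longrightarrow> distr M (count_space UNIV) (Z i) = measure_pmf (bernoulli_pmf p1)"
    \<comment> \<open>Assumption 2: the pairs (C_i(1), C_i(0)) are i.i.d.\<close>
    and Cindep: "prob_space.indep_vars M (\<lambda>_. borel \<Otimes>\<^sub>M borel) (\<lambda>i \<omega>. (C1 i \<omega>, C0 i \<omega>)) {..<n}"
    and Cident: "\<And>i. i < n \<Longrightarrow> distr M (borel \<Otimes>\<^sub>M borel) (\<lambda>\<omega>. (C1 i \<omega>, C0 i \<omega>)) = Cd"
    \<comment> \<open>G_z(c) = Pr(C_i(z) \<ge> c)\<close>
    and G1: "\<And>i c. i < n \<Longrightarrow> G1 c = measure M {\<omega> \<in> space M. ennreal c \<le> C1 i \<omega>}"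
    and G0: "\<And>i c. i < n \<Longrightarrow> G0 c = measure M {\<omega> \<in> space M. ennreal c \<le> C0 i \<omega>}"
    and k: "1 \<le> k" "k \<le> Kval n T0"
  shows "let t = tval n T0 k;
             g = p1 * G1 t + (1 - p1) * G0 t;
             \<phi> = p1 * G1 t / g
         in distr M (count_space UNIV) (Dcnt n Z T1 T0 C1 C0 t) = measure_pmf (binomial_pmf (dcnt n T0 t) g)
          \<and> distr M (count_space UNIV) (N1cnt n Z T1 T0 C1 C0 t) = measure_pmf (binomial_pmf (ncnt n T0 t) (g * \<phi>))
          \<and> distr M (count_space UNIV) (Ncnt n Z T1 T0 C1 C0 t) = measure_pmf (binomial_pmf (ncnt n T0 t) g)"
proof -
  interpret prob_space M by (rule P)
  define t where "t = tval n T0 k"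
  define L where "L = sorted_list_of_set (T0 ` {..<n})"
  have lenL: "length L = Kval n T0" unfolding L_def Kval_def by simp
  have "k - 1 < length L" using k lenL by simp
  then have "L ! (k - 1) \<in> set L" by (rule nth_mem)
  then have tin: "t \<in> T0 ` {..<n}" unfolding t_def tval_def L_def[symmetric] by (simp add: L_def)
  then obtain j where j: "j < n" "t = T0 j" by auto
  have t0: "0 \<le> t" using j Tnn(2)[OF j(1)] by simp
  define S where "S = {ennreal t..}"
  have Sb: "S \<in> sets borel" unfolding S_def by (rule borel_closed) simp
  have G1i: "measure M {\<omega>\<in>space M. C1 i \<omega> \<in> S} = G1 t" if "i < n" for i
    using G1[OF that, of t] unfolding S_def by simp
  have G0i: "measure M {\<omega>\<in>space M. C0 i \<omega> \<in> S} = G0 t" if "i < n" for i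
    using G0[OF that, of t] unfolding S_def by simp
  have G1b: "0 \<le> G1 t" "G1 t \<le> 1"
    by (metis G1i[OF j(1)] measure_nonneg) (metis G1i[OF j(1)] prob_le_1)
  have G0b: "0 \<le> G0 t" "G0 t \<le> 1"
    by (metis G0i[OF j(1)] measure_nonneg) (metis G0i[OF j(1)] prob_le_1)
  have E0: "measure M {\<omega>\<in>space M. C0 i \<omega> \<in> {}} = 0" for i by simp
  note fb = final_binom[OF P p1 Zmeas Cmeas Zindep_C Zindep Zbern Cindep]
  have Wle: "(ennreal t \<le> Wobs Z T1 T0 C1 C0 i \<omega>) = (t \<le> T0 i \<and> (if Z i \<omega> then C1 i \<omega> \<in> S else C0 i \<omega> \<in> S))"
    if "i < n" for i \<omega>
    using H0[OF that] Tnn(2)[OF that] t0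
    by (auto simp: Wobs_def Tobs_def Cobs_def S_def ennreal_le_iff)
  have D: "Dcnt n Z T1 T0 C1 C0 t = (\<lambda>\<omega>. card {i\<in>{i\<in>{..<n}. T0 i = t}. if Z i \<omega> then C1 i \<omega> \<in> S else C0 i \<omega> \<in> S})"
  proof (rule ext, unfold Dcnt_def, rule arg_cong[where f=card], rule set_eqI)
    fix \<omega> i
    show "(i \<in> {i\<in>{..<n}. Delta Z T1 T0 C1 C0 i \<omega> \<and> Wobs Z T1 T0 C1 C0 i \<omega> = ennreal t}) =
          (i \<in> {i\<in>{i\<in>{..<n}. T0 i = t}. if Z i \<omega> then C1 i \<omega> \<in> S else C0 i \<omega> \<in> S})"
    proof (cases "i < n")
      case True
      then show ?thesis using H0[OF True] Tnn(2)[OF True] t0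
        by (auto simp: Delta_def Wobs_def Tobs_def Cobs_def S_def min_def)
    qed simp
  qed
  have N: "Ncnt n Z T1 T0 C1 C0 t = (\<lambda>\<omega>. card {i\<in>{i\<in>{..<n}. t \<le> T0 i}. if Z i \<omega> then C1 i \<omega> \<in> S else C0 i \<omega> \<in> S})"
    unfolding Ncnt_def by (rule ext, rule arg_cong[where f=card]) (auto simp: Wle)
  have N1: "N1cnt n Z T1 T0 C1 C0 t = (\<lambda>\<omega>. card {i\<in>{i\<in>{..<n}. t \<le> T0 i}. if Z i \<omega> then C1 i \<omega> \<in> S else C0 i \<omega> \<in> {}})"
    unfolding N1cnt_def by (rule ext, rule arg_cong[where f=card]) (auto simp: Wle)
  define g where "g = p1 * G1 t + (1 - p1) * G0 t"
  have gphi: "g * (p1 * G1 t / g) = p1 * G1 t + (1 - p1) * 0"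
  proof (cases "g = 0")
    case True
    have "0 \<le> p1 * G1 t" "0 \<le> (1 - p1) * G0 t" using p1 G1b G0b by auto
    then have "p1 * G1 t = 0" using True unfolding g_def by linarith
    then show ?thesis using True by simp
  qed simp
  have r1: "distr M (count_space UNIV) (Dcnt n Z T1 T0 C1 C0 t) = measure_pmf (binomial_pmf (dcnt n T0 t) g)"
    unfolding D dcnt_def g_def by (rule fb) (use Sb G1i G1b G0i G0b in auto)
  have r2: "distr M (count_space UNIV) (Ncnt n Z T1 T0 C1 C0 t) = measure_pmf (binomial_pmf (ncnt n T0 t) g)"
    unfolding N ncnt_def g_def by (rule fb) (use Sb G1i G1b G0i G0b in auto)
  have r3: "distr M (count_space UNIV) (N1cnt n Z T1 T0 C1 C0 t) = measure_pmf (binomial_pmf (ncnt n T0 t) (g * (p1 * G1 t / g)))"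
    unfolding N1 ncnt_def gphi by (rule fb) (use Sb G1i G1b E0 in auto)
  show ?thesis unfolding Let_def t_def[symmetric] g_def[symmetric] using r1 r2 r3 by blast
qed

end
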